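(* Let $\lambda$ be an uncountable regular cardinal, and suppose $S=\langle I\times\kappa,\mathcal{R}\rangle$ is a $\lambda$-system with no cofinal branch. Suppose $\mathrm{width}(S)=\kappa'$. Then there is a $\lambda$-system $S'=\langle I\times\kappa',\mathcal{R}'\rangle$ with no cofinal branch such that $|\mathcal{R}'|=1$.
   Context: A binary relation $R$ is tree-like if whenever $a<_Rc$ and $b<_Rc$, then $a,b$ are $R$-comparable ($a=b$, $a<_Rb$ or $b<_Ra$). For a cardinal $0<\kappa<\lambda$, a $\lambda$-system $\langle I\times\kappa,\mathcal{R}\rangle$ consists of an unbounded $I\subseteq\lambda$ (levels $S_\alpha=\{\alpha\}\times\kappa$, $\alpha\in I$) and a set $\mathcal{R}$ of binary, transitive, tree-like relations on $I\times\kappa$ with $0<|\mathcal{R}|<\lambda$, such that if $(\alpha_0,\beta_0)<_R(\alpha_1,\beta_1)$ for $R\in\mathcal{R}$ then $\alpha_0<\alpha_1$, and for all $\alpha_0<\alpha_1$ in $I$ there are $\beta_0,\beta_1<\kappa$ and $R\in\mathcal{R}$ with $(\alpha_0,\beta_0)<_R(\alpha_1,\beta_1)$. $\mathrm{width}(S)=\max(\kappa,|\mathcal{R}|)$. A branch through $R\in\mathcal{R}$ is a set of pairwise $R$-comparable elements; it is cofinal if it meets $S_\alpha$ for unboundedly many $\alpha\in I$; $S$ has a cofinal branch if some $R\in\mathcal{R}$ has a cofinal branch. *)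

theory Defs
  imports Main
begin

text \<open>Cardinals are represented by cardinal orders (library: Card_order,
card_of, ordLess2, ordLeq2, ordIso2, regularCard). The cardinal lambda is a
cardinal well-order lam; its ordinals are the elements of Field lam, with
non-strict order lam. A cardinal kappa is represented by a set K of
cardinality kappa; levels are {alpha} \<times> K.\<close>

definition tree_like :: "'b rel \<Rightarrow> bool" where
  "tree_like R \<longleftrightarrow> (\<forall>a b c. (a, c) \<in> R \<and> (b, c) \<in> R \<longrightarrow> a = b \<or> (a, b) \<in> R \<or> (b, a) \<in> R)"

definition unbounded_in :: "'a rel \<Rightarrow> 'a set \<Rightarrow> bool" where
  "unbounded_in lam I \<longleftrightarrow> I \<subseteq> Field lam \<and> (\<forall>\<alpha>\<in>Field lam. \<exists>\<beta>\<in>I. (\<alpha>, \<beta>) \<in> lam)"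

definition lambda_system ::
  "'a rel \<Rightarrow> 'a set \<Rightarrow> 'k set \<Rightarrow> (('a \<times> 'k) rel) set \<Rightarrow> bool" where
  "lambda_system lam I K Rs \<longleftrightarrow>
     unbounded_in lam I \<and>
     K \<noteq> {} \<and> ordLess2 (card_of K) lam \<and>
     Rs \<noteq> {} \<and> ordLess2 (card_of Rs) lam \<and>
     (\<forall>R\<in>Rs. R \<subseteq> (I \<times> K) \<times> (I \<times> K) \<and> trans R \<and> tree_like R \<and>
        (\<forall>a0 b0 a1 b1. ((a0, b0), (a1, b1)) \<in> R \<longrightarrow> (a0, a1) \<in> lam \<and> a0 \<noteq> a1)) \<and>
     (\<forall>\<alpha>0\<in>I. \<forall>\<alpha>1\<in>I. (\<alpha>0, \<alpha>1) \<in> lam \<and> \<alpha>0 \<noteq> \<alpha>1 \<longrightarrow>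
        (\<exists>\<beta>0\<in>K. \<exists>\<beta>1\<in>K. \<exists>R\<in>Rs. ((\<alpha>0, \<beta>0), (\<alpha>1, \<beta>1)) \<in> R))"

definition is_branch :: "('a \<times> 'k) rel \<Rightarrow> ('a \<times> 'k) set \<Rightarrow> bool" where
  "is_branch R B \<longleftrightarrow> (\<forall>x\<in>B. \<forall>y\<in>B. x = y \<or> (x, y) \<in> R \<or> (y, x) \<in> R)"

definition cofinal_branch ::
  "'a rel \<Rightarrow> 'a set \<Rightarrow> 'k set \<Rightarrow> ('a \<times> 'k) rel \<Rightarrow> ('a \<times> 'k) set \<Rightarrow> bool" where
  "cofinal_branch lam I K R B \<longleftrightarrow> B \<subseteq> I \<times> K \<and> is_branch R B \<and>
     unbounded_in lam {\<alpha> \<in> I. \<exists>\<beta>. (\<alpha>, \<beta>) \<in> B}"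

definition has_cofinal_branch ::
  "'a rel \<Rightarrow> 'a set \<Rightarrow> 'k set \<Rightarrow> (('a \<times> 'k) rel) set \<Rightarrow> bool" where
  "has_cofinal_branch lam I K Rs \<longleftrightarrow> (\<exists>R\<in>Rs. \<exists>B. cofinal_branch lam I K R B)"

text \<open>width(S) = max(|K|, |Rs|), compared as cardinals.\<close>
definition has_width :: "'k set \<Rightarrow> (('a \<times> 'k) rel) set \<Rightarrow> 'c set \<Rightarrow> bool" where
  "has_width K Rs K' \<longleftrightarrow>
     (ordLeq2 (card_of Rs) (card_of K) \<longrightarrow> ordIso2 (card_of K') (card_of K)) \<and>
     (ordLeq2 (card_of K) (card_of Rs) \<longrightarrow> ordIso2 (card_of K') (card_of Rs))"

end

theory Submission
  imports Defs
begin

lemma ultra_exists: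
  fixes big :: "'a set \<Rightarrow> bool"
  assumes univ: "big UNIV"
  shows "\<exists>M. (\<forall>F. finite F \<and> F \<subseteq> M \<longrightarrow> big (\<Inter>F)) \<and>
             (\<forall>A. (\<forall>F. finite F \<and> F \<subseteq> M \<longrightarrow> big (A \<inter> \<Inter>F)) \<longrightarrow> A \<in> M)"
proof -
  define Fam where "Fam = {M. \<forall>F. finite F \<and> F \<subseteq> M \<longrightarrow> big (\<Inter>F)}"
  have "\<forall>C\<in>chains Fam. \<Union>C \<in> Fam"
  proof
    fix C assume C: "C \<in> chains Fam"
    show "\<Union>C \<in> Fam" unfolding Fam_def
    proof (intro CollectI allI impI)
      fix F assume F: "finite F \<and> F \<subseteq> \<Union>C"
      show "big (\<Inter>F)"
      proof (cases "C = {}")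
        case True then have "F = {}" using F by auto
        then show ?thesis using univ by simp
      next
        case False
        have sc: "subset.chain Fam C" using C by (simp add: chains_alt_def)
        obtain B where "B \<in> C" "F \<subseteq> B"
          using finite_subset_Union_chain[OF _ _ False sc] F by blast
        then show ?thesis using F C unfolding chains_def Fam_def by blast
      qed
    qed
  qed
  then obtain M where M: "M \<in> Fam" and mx: "\<And>X. X \<in> Fam \<Longrightarrow> M \<subseteq> X \<Longrightarrow> X = M"
    using Zorn_Lemma[of Fam] by blast
  show ?thesis
  proof (intro exI conjI allI impI)
    show "\<And>F. finite F \<and> F \<subseteq> M \<Longrightarrow> big (\<Inter>F)" using M unfolding Fam_def by blast
  next
    fix A assume H: "\<forall>F. finite F \<and> F \<subseteq> M \<longrightarrow> big (A \<inter> \<Inter>F)"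
    have "insert A M \<in> Fam" unfolding Fam_def
    proof (intro CollectI allI impI)
      fix F assume F: "finite F \<and> F \<subseteq> insert A M"
      show "big (\<Inter>F)"
      proof (cases "A \<in> F")
        case True
        have "\<Inter>F = A \<inter> \<Inter>(F - {A})" using True by blast
        moreover have "finite (F - {A}) \<and> F - {A} \<subseteq> M" using F by auto
        ultimately show ?thesis using H by metis
      next
        case False
        then have "finite F \<and> F \<subseteq> M" using F by auto
        then show ?thesis using M unfolding Fam_def by blast
      qed
    qed
    then have "insert A M = M" using mx by blast
    then show "A \<in> M" by blast
  qed
qed

lemma nonbig_Union:
  assumes un: "\<And>A B. \<not> big A \<Longrightarrow> \<not> big B \<Longrightarrow> \<not> big (A \<union> B)"
    and emp: "\<not> big {}"
  shows "finite C \<Longrightarrow> (\<forall>c\<in>C. \<not> big c) \<Longrightarrow> \<not> big (\<Union>C)"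
proof (induction C rule: finite_induct)
  case empty then show ?case using emp by simp
next
  case (insert x F) then show ?case using un by simp
qed

lemma ultra_props:
  fixes big :: "'a set \<Rightarrow> bool"
  assumes M1: "\<forall>F. finite F \<and> F \<subseteq> M \<longrightarrow> big (\<Inter>F)"
    and M2: "\<forall>A. (\<forall>F. finite F \<and> F \<subseteq> M \<longrightarrow> big (A \<inter> \<Inter>F)) \<longrightarrow> A \<in> M"
    and un0: "\<forall>A B. \<not> big A \<and> \<not> big B \<longrightarrow> \<not> big (A \<union> B)"
    and mono0: "\<forall>A B. big A \<and> A \<subseteq> B \<longrightarrow> big B"
    and emp: "\<not> big {}"
  shows "A \<in> M \<Longrightarrow> A \<subseteq> B \<Longrightarrow> B \<in> M"
    and "A \<in> M \<Longrightarrow> B \<in> M \<Longrightarrow> A \<inter> B \<noteq> {}"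
    and "finite C \<Longrightarrow> \<Union>C \<in> M \<Longrightarrow> \<exists>c\<in>C. c \<in> M"
proof -
  have un: "\<And>A B. \<not> big A \<Longrightarrow> \<not> big B \<Longrightarrow> \<not> big (A \<union> B)" using un0 by blast
  have mono: "\<And>A B. big A \<Longrightarrow> A \<subseteq> B \<Longrightarrow> big B" using mono0 by blast
  assume A: "A \<in> M" "A \<subseteq> B"
  show "B \<in> M"
  proof (rule M2[rule_format])
    fix F assume F: "finite F \<and> F \<subseteq> M"
    then have "big (\<Inter>(insert A F))" using M1 A by auto
    moreover have "\<Inter>(insert A F) \<subseteq> B \<inter> \<Inter>F" using A by auto
    ultimately show "big (B \<inter> \<Inter>F)" using mono by blast
  qed
next
  assume A: "A \<in> M" "B \<in> M"
  then have "big (\<Inter>{A,B})" using M1[rule_format, of "{A,B}"] by simp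
  then have bb: "big (A \<inter> B)" by simp
  show "A \<inter> B \<noteq> {}"
  proof
    assume "A \<inter> B = {}" with bb emp show False by simp
  qed
next
  assume C: "finite C" "\<Union>C \<in> M"
  show "\<exists>c\<in>C. c \<in> M"
  proof (rule ccontr)
    assume "\<not> ?thesis"
    then have "\<forall>c\<in>C. \<exists>F. finite F \<and> F \<subseteq> M \<and> \<not> big (c \<inter> \<Inter>F)" using M2 by blast
    then obtain Fc where Fc: "\<And>c. c\<in>C \<Longrightarrow> finite (Fc c) \<and> Fc c \<subseteq> M \<and> \<not> big (c \<inter> \<Inter>(Fc c))"
      by metis
    define F where "F = insert (\<Union>C) (\<Union>c\<in>C. Fc c)"
    have "finite F \<and> F \<subseteq> M" unfolding F_def using C Fc by auto
    then have b: "big (\<Inter>F)" using M1 by blast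
    have "\<Inter>F \<subseteq> \<Union>((\<lambda>c. c \<inter> \<Inter>(Fc c)) ` C)"
    proof
      fix x assume x: "x \<in> \<Inter>F"
      then have "x \<in> \<Union>C" unfolding F_def by simp
      then obtain c where c: "c \<in> C" "x \<in> c" by blast
      have "x \<in> \<Inter>(Fc c)" using x c(1) unfolding F_def by blast
      then show "x \<in> \<Union>((\<lambda>c. c \<inter> \<Inter>(Fc c)) ` C)" using c by blast
    qed
    moreover have "\<not> big (\<Union>((\<lambda>c. c \<inter> \<Inter>(Fc c)) ` C))"
      apply (rule nonbig_Union[of big])
      using un0 emp C Fc by auto
    ultimately show False using b mono0 by blast
  qed
qed

lemma finite_width_branch:
  fixes lam :: "'a rel" and I :: "'a set" and K :: "'k set" and Rs :: "(('a \<times> 'k) rel) set"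
  assumes co: "Card_order lam" and inf: "\<not> finite (Field lam)"
    and sys: "lambda_system lam I K Rs" and fK: "finite K" and fR: "finite Rs"
  shows "has_cofinal_branch lam I K Rs"
proof -
  have wo: "well_order_on (Field lam) lam" using co card_order_on_well_order_on by blast
  then have tr: "trans lam" and an: "antisym lam" and tot: "total_on (Field lam) lam"
    and rf: "refl_on (Field lam) lam"
    unfolding well_order_on_def linear_order_on_def partial_order_on_def preorder_on_def by auto
  have unb: "unbounded_in lam I" and IF: "I \<subseteq> Field lam" using sys
    unfolding lambda_system_def unbounded_in_def by auto
  have cmp: "\<And>x y. x \<in> Field lam \<Longrightarrow> y \<in> Field lam \<Longrightarrow> (x,y) \<in> lam \<or> (y,x) \<in> lam"
    using tot rf unfolding total_on_def refl_on_def by metis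
  have trn: "\<And>x y z. (x,y) \<in> lam \<Longrightarrow> (y,z) \<in> lam \<Longrightarrow> (x,z) \<in> lam"
    using tr unfolding trans_def by blast
  have nomax: "\<And>a. a \<in> Field lam \<Longrightarrow> \<exists>b \<in> Field lam. a \<noteq> b \<and> (a,b) \<in> lam"
    using infinite_Card_order_limit[OF co inf] by blast
  define big where "big A \<longleftrightarrow> (\<forall>\<delta>\<in>Field lam. \<exists>\<beta>\<in>A \<inter> I. (\<delta>,\<beta>) \<in> lam)" for A
  have univ: "big UNIV" using unb unfolding big_def unbounded_in_def by auto
  have un: "\<And>A B. \<not> big A \<Longrightarrow> \<not> big B \<Longrightarrow> \<not> big (A \<union> B)"
  proof -
    fix A B assume "\<not> big A" "\<not> big B"
    then obtain d1 d2 where d: "d1 \<in> Field lam" "d2 \<in> Field lam"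
      "\<forall>\<beta>\<in>A \<inter> I. (d1,\<beta>) \<notin> lam" "\<forall>\<beta>\<in>B \<inter> I. (d2,\<beta>) \<notin> lam"
      unfolding big_def by blast
    show "\<not> big (A \<union> B)"
    proof (cases "(d1,d2) \<in> lam")
      case True
      then have "\<forall>\<beta>\<in>(A \<union> B) \<inter> I. (d2,\<beta>) \<notin> lam" using d trn by blast
      then show ?thesis using d unfolding big_def by blast
    next
      case False
      then have "(d2,d1) \<in> lam" using cmp d by blast
      then have "\<forall>\<beta>\<in>(A \<union> B) \<inter> I. (d1,\<beta>) \<notin> lam" using d trn by blast
      then show ?thesis using d unfolding big_def by blast
    qed
  qed
  have mono: "\<And>A B. big A \<Longrightarrow> A \<subseteq> B \<Longrightarrow> big B" unfolding big_def by blast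
  have emp: "\<not> big {}" using inf unfolding big_def by auto
  obtain M where M1: "\<forall>F. finite F \<and> F \<subseteq> M \<longrightarrow> big (\<Inter>F)"
    and M2: "\<forall>A. (\<forall>F. finite F \<and> F \<subseteq> M \<longrightarrow> big (A \<inter> \<Inter>F)) \<longrightarrow> A \<in> M"
    using ultra_exists[of big, OF univ] by blast
  have un0: "\<forall>A B. \<not> big A \<and> \<not> big B \<longrightarrow> \<not> big (A \<union> B)" using un by blast
  have mono0: "\<forall>A B. big A \<and> A \<subseteq> B \<longrightarrow> big B" using mono by blast
  note P = ultra_props[OF M1 M2 un0 mono0 emp]
  define T where "T \<alpha> = {\<beta>\<in>I. (\<alpha>,\<beta>) \<in> lam \<and> \<alpha> \<noteq> \<beta>}" for \<alpha>
  have TM: "T \<alpha> \<in> M" if aI: "\<alpha> \<in> I" for \<alpha>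
  proof (rule M2[rule_format])
    fix F assume F: "finite F \<and> F \<subseteq> M"
    then have bF: "big (\<Inter>F)" using M1 by blast
    show "big (T \<alpha> \<inter> \<Inter>F)" unfolding big_def
    proof
      fix \<delta> assume dF: "\<delta> \<in> Field lam"
      have aF: "\<alpha> \<in> Field lam" using aI IF by blast
      obtain m where m: "m \<in> Field lam" "(\<delta>,m) \<in> lam" "(\<alpha>,m) \<in> lam"
      proof (cases "(\<delta>,\<alpha>) \<in> lam")
        case True then show ?thesis using that[of \<alpha>] aF rf unfolding refl_on_def by blast
      next
        case False then have "(\<alpha>,\<delta>) \<in> lam" using cmp aF dF by blast
        then show ?thesis using that[of \<delta>] dF rf unfolding refl_on_def by blast
      qed
      obtain m' where m': "m' \<in> Field lam" "m \<noteq> m'" "(m,m') \<in> lam" using nomax[OF m(1)] by blast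
      obtain \<beta> where b: "\<beta> \<in> \<Inter>F \<inter> I" "(m',\<beta>) \<in> lam" using bF m'(1) unfolding big_def by blast
      have "(\<alpha>,\<beta>) \<in> lam" using trn m(3) m'(3) b(2) by blast
      moreover have "\<alpha> \<noteq> \<beta>"
      proof
        assume "\<alpha> = \<beta>"
        then have "(m',m) \<in> lam" using b(2) m(3) trn by blast
        then show False using m'(2,3) an unfolding antisym_def by blast
      qed
      moreover have "(\<delta>,\<beta>) \<in> lam" using trn m(2) m'(3) b(2) by blast
      ultimately show "\<exists>\<beta>\<in>(T \<alpha> \<inter> \<Inter>F) \<inter> I. (\<delta>,\<beta>) \<in> lam" using b(1) unfolding T_def by blast
    qed
  qed
  have IM: "I \<in> M"
  proof (rule M2[rule_format])
    fix F assume "finite F \<and> F \<subseteq> M"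
    then have "big (\<Inter>F)" using M1 by blast
    then show "big (I \<inter> \<Inter>F)" unfolding big_def by blast
  qed
  define C where "C = K \<times> Rs \<times> K"
  define A where "A (\<alpha>::'a) (c::'k \<times> ('a \<times> 'k) rel \<times> 'k) = {\<gamma>. ((\<alpha>, fst c), (\<gamma>, snd (snd c))) \<in> fst (snd c)}" for \<alpha> c
  have fC: "finite C" unfolding C_def using fK fR by simp
  have ex: "\<exists>c\<in>C. A \<alpha> c \<in> M" if aI: "\<alpha> \<in> I" for \<alpha>
  proof -
    have "T \<alpha> \<subseteq> \<Union>(A \<alpha> ` C)"
    proof
      fix \<gamma> assume "\<gamma> \<in> T \<alpha>"
      then have "\<gamma> \<in> I" "(\<alpha>,\<gamma>) \<in> lam" "\<alpha> \<noteq> \<gamma>" unfolding T_def by auto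
      then obtain b0 b1 R where "b0 \<in> K" "b1 \<in> K" "R \<in> Rs" "((\<alpha>,b0),(\<gamma>,b1)) \<in> R"
        using sys aI unfolding lambda_system_def by blast
      then show "\<gamma> \<in> \<Union>(A \<alpha> ` C)" unfolding A_def C_def by force
    qed
    then have "\<Union>(A \<alpha> ` C) \<in> M" using P(1) TM[OF aI] by blast
    then obtain x where "x \<in> A \<alpha> ` C" "x \<in> M" using P(3)[of "A \<alpha> ` C"] fC by blast
    then show ?thesis by blast
  qed
  obtain f where f: "\<And>\<alpha>. \<alpha> \<in> I \<Longrightarrow> f \<alpha> \<in> C \<and> A \<alpha> (f \<alpha>) \<in> M"
    using ex by metis
  define X where "X c = {\<alpha>\<in>I. f \<alpha> = c}" for c
  have "I \<subseteq> \<Union>(X ` C)" unfolding X_def using f by blast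
  then have "\<Union>(X ` C) \<in> M" using P(1) IM by blast
  then obtain c where c: "c \<in> C" "X c \<in> M" using P(3)[of "X ` C"] fC by blast
  obtain b0 R0 b1 where cc: "c = (b0,R0,b1)" by (cases c) auto
  have b0: "b0 \<in> K" and R0: "R0 \<in> Rs" using c(1) cc unfolding C_def by auto
  have tl: "tree_like R0" using sys R0 unfolding lambda_system_def by blast
  have bigX: "big (X c)" using M1[rule_format, of "{X c}"] c(2) by simp
  define B where "B = (\<lambda>\<alpha>. (\<alpha>, b0)) ` X c"
  have lev: "{\<alpha> \<in> I. \<exists>\<beta>. (\<alpha>, \<beta>) \<in> B} = X c" unfolding B_def X_def by auto
  have "cofinal_branch lam I K R0 B"
    unfolding cofinal_branch_def
  proof (intro conjI)
    show "B \<subseteq> I \<times> K" unfolding B_def X_def using b0 by auto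
    show "unbounded_in lam {\<alpha> \<in> I. \<exists>\<beta>. (\<alpha>, \<beta>) \<in> B}" unfolding lev unbounded_in_def
      using bigX IF unfolding big_def X_def by blast
    show "is_branch R0 B" unfolding is_branch_def
    proof (intro ballI)
      fix x y assume "x \<in> B" "y \<in> B"
      then obtain a a' where xy: "x = (a,b0)" "y = (a',b0)" "a \<in> X c" "a' \<in> X c" unfolding B_def by blast
      have aa: "a \<in> I" "f a = c" "a' \<in> I" "f a' = c" using xy(3,4) unfolding X_def by auto
      have "A a c \<in> M" "A a' c \<in> M" using f[OF aa(1)] f[OF aa(3)] aa(2,4) by auto
      then have "A a c \<inter> A a' c \<noteq> {}" using P(2) by blast
      then obtain \<gamma> where "\<gamma> \<in> A a c" "\<gamma> \<in> A a' c" by blast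
      then have "((a,b0),(\<gamma>,b1)) \<in> R0" "((a',b0),(\<gamma>,b1)) \<in> R0" unfolding A_def cc by auto
      then show "x = y \<or> (x, y) \<in> R0 \<or> (y, x) \<in> R0" using tl xy(1,2) unfolding tree_like_def by blast
    qed
  qed
  then show ?thesis unfolding has_cofinal_branch_def using R0 by blast
qed

lemma construct:
  fixes lam :: "'a rel" and I :: "'a set" and K :: "'k set"
    and Rs :: "(('a \<times> 'k) rel) set" and K' :: "'c set"
  assumes co: "Card_order lam" and inf: "\<not> finite (Field lam)"
    and sys: "lambda_system lam I K Rs" and nb: "\<not> has_cofinal_branch lam I K Rs"
    and g: "bij_betw g K' (K \<times> Rs)" and cK': "ordLess2 (card_of K') lam"
  shows "\<exists>R'. lambda_system lam I K' {R'} \<and> \<not> has_cofinal_branch lam I K' {R'}"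
proof -
  define R' where "R' = {((\<alpha>,k),(\<alpha>',k')). k \<in> K' \<and> k' \<in> K' \<and> snd (g k) = snd (g k') \<and>
     ((\<alpha>, fst (g k)), (\<alpha>', fst (g k'))) \<in> snd (g k)}"
  have gin: "\<And>k. k \<in> K' \<Longrightarrow> fst (g k) \<in> K \<and> snd (g k) \<in> Rs"
  proof -
    fix k assume "k \<in> K'"
    then have "g k \<in> K \<times> Rs" using g unfolding bij_betw_def by blast
    then show "fst (g k) \<in> K \<and> snd (g k) \<in> Rs" by (simp add: mem_Times_iff)
  qed
  have ginj: "\<And>k k'. k \<in> K' \<Longrightarrow> k' \<in> K' \<Longrightarrow> g k = g k' \<Longrightarrow> k = k'"
    using g unfolding bij_betw_def inj_on_def by blast
  have gsurj: "\<And>b R. b \<in> K \<Longrightarrow> R \<in> Rs \<Longrightarrow> \<exists>k\<in>K'. g k = (b,R)"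
  proof -
    fix b R assume "b \<in> K" "R \<in> Rs"
    then have "(b,R) \<in> g ` K'" using g unfolding bij_betw_def by simp
    then show "\<exists>k\<in>K'. g k = (b,R)" by force
  qed
  have RsP: "\<And>R. R \<in> Rs \<Longrightarrow> R \<subseteq> (I \<times> K) \<times> (I \<times> K) \<and> trans R \<and> tree_like R \<and>
        (\<forall>a0 b0 a1 b1. ((a0, b0), (a1, b1)) \<in> R \<longrightarrow> (a0, a1) \<in> lam \<and> a0 \<noteq> a1)"
  proof -
    fix R assume R: "R \<in> Rs"
    have "\<forall>R\<in>Rs. R \<subseteq> (I \<times> K) \<times> (I \<times> K) \<and> trans R \<and> tree_like R \<and>
        (\<forall>a0 b0 a1 b1. ((a0, b0), (a1, b1)) \<in> R \<longrightarrow> (a0, a1) \<in> lam \<and> a0 \<noteq> a1)"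
      using sys unfolding lambda_system_def by (elim conjE) assumption
    then show "R \<subseteq> (I \<times> K) \<times> (I \<times> K) \<and> trans R \<and> tree_like R \<and>
        (\<forall>a0 b0 a1 b1. ((a0, b0), (a1, b1)) \<in> R \<longrightarrow> (a0, a1) \<in> lam \<and> a0 \<noteq> a1)"
      using R by (rule bspec)
  qed
  have wo: "Well_order lam" using co card_order_on_well_order_on by blast
  have "K \<noteq> {}" using sys unfolding lambda_system_def by (elim conjE) assumption
  have "Rs \<noteq> {}" using sys unfolding lambda_system_def by (elim conjE) assumption
  then have "K \<times> Rs \<noteq> {}" using \<open>K \<noteq> {}\<close> by simp
  then have K'ne: "K' \<noteq> {}" using g unfolding bij_betw_def by auto
  have sys': "lambda_system lam I K' {R'}"
    unfolding lambda_system_def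
  proof (intro conjI)
    show "unbounded_in lam I" using sys unfolding lambda_system_def by blast
    show "K' \<noteq> {}" by (rule K'ne)
    show "ordLess2 (card_of K') lam" by (rule cK')
    show "{R'} \<noteq> {}" by simp
    show "ordLess2 (card_of {R'}) lam"
      by (rule finite_ordLess_infinite[OF card_of_Well_order wo]) (simp add: Field_card_of, rule inf)
    show "\<forall>R\<in>{R'}. R \<subseteq> (I \<times> K') \<times> I \<times> K' \<and> trans R \<and> tree_like R \<and>
        (\<forall>a0 b0 a1 b1. ((a0, b0), a1, b1) \<in> R \<longrightarrow> (a0, a1) \<in> lam \<and> a0 \<noteq> a1)"
    proof (intro ballI)
      fix R assume "R \<in> {R'}"
      then have RR: "R = R'" by simp
      show "R \<subseteq> (I \<times> K') \<times> I \<times> K' \<and> trans R \<and> tree_like R \<and>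
        (\<forall>a0 b0 a1 b1. ((a0, b0), a1, b1) \<in> R \<longrightarrow> (a0, a1) \<in> lam \<and> a0 \<noteq> a1)"
      proof (intro conjI)
      show "R \<subseteq> (I \<times> K') \<times> I \<times> K'"
      proof
        fix p assume "p \<in> R"
        then obtain a k a' k' where p: "p = ((a,k),(a',k'))" "k \<in> K'" "k' \<in> K'"
           "((a, fst (g k)), (a', fst (g k'))) \<in> snd (g k)" unfolding RR R'_def by blast
        then show "p \<in> (I \<times> K') \<times> I \<times> K'" using RsP[of "snd (g k)"] gin[of k] by blast
      qed
      show "trans R" unfolding trans_def
      proof (intro allI impI)
        fix x y z assume "(x,y) \<in> R" "(y,z) \<in> R"
        then obtain a k a' k' a'' k'' where xyz: "x = (a,k)" "y = (a',k')" "z = (a'',k'')"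
          "k \<in> K'" "k' \<in> K'" "k'' \<in> K'" "snd (g k) = snd (g k')" "snd (g k') = snd (g k'')"
          "((a, fst (g k)), (a', fst (g k'))) \<in> snd (g k)"
          "((a', fst (g k')), (a'', fst (g k''))) \<in> snd (g k')" unfolding RR R'_def by auto
        have "trans (snd (g k))" using RsP gin xyz(4) by blast
        then have "((a, fst (g k)), (a'', fst (g k''))) \<in> snd (g k)"
          using xyz(7,9,10) unfolding trans_def by metis
        then show "(x,z) \<in> R" unfolding RR R'_def using xyz by auto
      qed
      show "tree_like R" unfolding tree_like_def
      proof (intro allI impI)
        fix x y z assume "(x,z) \<in> R \<and> (y,z) \<in> R"
        then obtain a k a' k' a'' k'' where xyz: "x = (a,k)" "y = (a',k')" "z = (a'',k'')"
          "k \<in> K'" "k' \<in> K'" "k'' \<in> K'" "snd (g k) = snd (g k'')" "snd (g k') = snd (g k'')"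
          "((a, fst (g k)), (a'', fst (g k''))) \<in> snd (g k'')"
          "((a', fst (g k')), (a'', fst (g k''))) \<in> snd (g k'')" unfolding RR R'_def by auto
        have "tree_like (snd (g k''))" using RsP gin xyz(6) by blast
        then have c: "(a, fst (g k)) = (a', fst (g k')) \<or>
            ((a, fst (g k)), (a', fst (g k'))) \<in> snd (g k'') \<or>
            ((a', fst (g k')), (a, fst (g k))) \<in> snd (g k'')"
          using xyz(9,10) unfolding tree_like_def by blast
        show "x = y \<or> (x, y) \<in> R \<or> (y, x) \<in> R"
        proof (cases "(a, fst (g k)) = (a', fst (g k'))")
          case True
          then have "g k = g k'" using xyz(7,8) by (simp add: prod_eq_iff)
          then have "k = k'" using ginj xyz(4,5) by blast
          then show ?thesis using True xyz(1,2) by simp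
        next
          case False
          then show ?thesis using c xyz unfolding RR R'_def by auto
        qed
      qed
      show "\<forall>a0 b0 a1 b1. ((a0, b0), a1, b1) \<in> R \<longrightarrow> (a0, a1) \<in> lam \<and> a0 \<noteq> a1"
      proof (intro allI impI)
        fix a0 b0 a1 b1 assume "((a0, b0), a1, b1) \<in> R"
        then have "b0 \<in> K'" "((a0, fst (g b0)), (a1, fst (g b1))) \<in> snd (g b0)" unfolding RR R'_def by auto
        then show "(a0, a1) \<in> lam \<and> a0 \<noteq> a1" using RsP gin by blast
      qed
    qed
    qed
    show "\<forall>\<alpha>0\<in>I. \<forall>\<alpha>1\<in>I. (\<alpha>0, \<alpha>1) \<in> lam \<and> \<alpha>0 \<noteq> \<alpha>1 \<longrightarrow>
        (\<exists>\<beta>0\<in>K'. \<exists>\<beta>1\<in>K'. \<exists>R\<in>{R'}. ((\<alpha>0, \<beta>0), \<alpha>1, \<beta>1) \<in> R)"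
    proof (intro ballI impI)
      fix a0 a1 assume "a0 \<in> I" "a1 \<in> I" "(a0, a1) \<in> lam \<and> a0 \<noteq> a1"
      then obtain b0 b1 R where b: "b0 \<in> K" "b1 \<in> K" "R \<in> Rs" "((a0,b0),(a1,b1)) \<in> R"
        using sys unfolding lambda_system_def by blast
      obtain k0 where k0: "k0 \<in> K'" "g k0 = (b0,R)" using gsurj b by blast
      obtain k1 where k1: "k1 \<in> K'" "g k1 = (b1,R)" using gsurj b by blast
      have "((a0, k0), a1, k1) \<in> R'" unfolding R'_def using k0 k1 b(4) by simp
      then show "\<exists>\<beta>0\<in>K'. \<exists>\<beta>1\<in>K'. \<exists>R\<in>{R'}. ((a0, \<beta>0), a1, \<beta>1) \<in> R" using k0 k1 by blast
    qed
  qed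
  have "\<not> has_cofinal_branch lam I K' {R'}"
  proof
    assume "has_cofinal_branch lam I K' {R'}"
    then obtain B where B: "B \<subseteq> I \<times> K'" "is_branch R' B"
      "unbounded_in lam {\<alpha> \<in> I. \<exists>\<beta>. (\<alpha>, \<beta>) \<in> B}"
      unfolding has_cofinal_branch_def cofinal_branch_def by blast
    obtain d where "d \<in> Field lam" using inf by (metis finite.emptyI ex_in_conv)
    then obtain x0 where x0: "x0 \<in> B" using B(3) unfolding unbounded_in_def by blast
    define R0 where "R0 = snd (g (snd x0))"
    have R0: "R0 \<in> Rs" using gin B(1) x0 unfolding R0_def by auto
    have same: "\<And>y. y \<in> B \<Longrightarrow> snd (g (snd y)) = R0"
    proof -
      fix y assume y: "y \<in> B"
      then have "y = x0 \<or> (y, x0) \<in> R' \<or> (x0, y) \<in> R'" using B(2) x0 unfolding is_branch_def by blast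
      then show "snd (g (snd y)) = R0" unfolding R0_def R'_def by auto
    qed
    define h where "h p = (fst p, fst (g (snd p)))" for p :: "'a \<times> 'c"
    define B0 where "B0 = h ` B"
    have "cofinal_branch lam I K R0 B0" unfolding cofinal_branch_def
    proof (intro conjI)
      show "B0 \<subseteq> I \<times> K" unfolding B0_def h_def using B(1) gin by auto
      have "{\<alpha> \<in> I. \<exists>\<beta>. (\<alpha>, \<beta>) \<in> B0} = {\<alpha> \<in> I. \<exists>\<beta>. (\<alpha>, \<beta>) \<in> B}"
        unfolding B0_def h_def by force
      then show "unbounded_in lam {\<alpha> \<in> I. \<exists>\<beta>. (\<alpha>, \<beta>) \<in> B0}" using B(3) by simp
      show "is_branch R0 B0" unfolding is_branch_def
      proof (intro ballI)
        fix u v assume "u \<in> B0" "v \<in> B0"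
        then obtain y z where yz: "y \<in> B" "z \<in> B" "u = h y" "v = h z" unfolding B0_def by blast
        then have "y = z \<or> (y, z) \<in> R' \<or> (z, y) \<in> R'" using B(2) unfolding is_branch_def by blast
        moreover have "(y,z) \<in> R' \<Longrightarrow> (h y, h z) \<in> R0" using same[OF yz(1)]
          unfolding R'_def h_def by auto
        moreover have "(z,y) \<in> R' \<Longrightarrow> (h z, h y) \<in> R0" using same[OF yz(2)]
          unfolding R'_def h_def by auto
        ultimately show "u = v \<or> (u, v) \<in> R0 \<or> (v, u) \<in> R0" using yz by blast
      qed
    qed
    then show False using nb R0 unfolding has_cofinal_branch_def by blast
  qed
  then show ?thesis using sys' by blast
qed

theorem mainTheorem14:
  fixes lam :: "'a rel" and I :: "'a set" and K :: "'k set"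
    and Rs :: "(('a \<times> 'k) rel) set" and K' :: "'c set"
  assumes "Card_order lam" and "regularCard lam"
    and "ordLess2 (card_of (UNIV :: nat set)) lam"
    and "lambda_system lam I K Rs"
    and "\<not> has_cofinal_branch lam I K Rs"
    and "has_width K Rs K'"
  shows "\<exists>R'. lambda_system lam I K' {R'} \<and> \<not> has_cofinal_branch lam I K' {R'}"
proof -
  note co = assms(1) and sys = assms(4) and nb = assms(5) and w = assms(6)
  have "ordLeq2 (card_of (UNIV :: nat set)) lam" using assms(3) by (rule ordLess_imp_ordLeq)
  then have "ordLeq2 (card_of (UNIV :: nat set)) (card_of (Field lam))"
    by (rule ordLeq_ordIso_trans[OF _ ordIso_symmetric[OF card_of_Field_ordIso[OF co]]])
  then have inf: "\<not> finite (Field lam)" by (simp only: infinite_iff_card_of_nat)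
  have Kne: "K \<noteq> {}" using sys unfolding lambda_system_def by (elim conjE) assumption
  have Rne: "Rs \<noteq> {}" using sys unfolding lambda_system_def by (elim conjE) assumption
  have cK: "ordLess2 (card_of K) lam" using sys unfolding lambda_system_def by (elim conjE) assumption
  have cR: "ordLess2 (card_of Rs) lam" using sys unfolding lambda_system_def by (elim conjE) assumption
  show ?thesis
  proof (cases "finite K \<and> finite Rs")
    case True
    then have "has_cofinal_branch lam I K Rs" using finite_width_branch[OF co inf sys] by blast
    then show ?thesis using nb by blast
  next
    case False
    have "\<exists>g. bij_betw g K' (K \<times> Rs) \<and> ordLess2 (card_of K') lam"
    proof (cases "ordLeq2 (card_of Rs) (card_of K)")
      case True
      then have i1: "ordIso2 (card_of K') (card_of K)" using w unfolding has_width_def by blast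
      have "\<not> finite K"
      proof
        assume "finite K" then have "finite Rs" using card_of_ordLeq_finite[OF True] by blast
        then show False using False \<open>finite K\<close> by blast
      qed
      then have i2: "ordIso2 (card_of (K \<times> Rs)) (card_of K)"
        by (rule card_of_Times_infinite_simps(1)[OF _ Rne True])
      have "ordIso2 (card_of K') (card_of (K \<times> Rs))"
        using ordIso_transitive[OF i1 ordIso_symmetric[OF i2]] .
      moreover have "ordLess2 (card_of K') lam" using ordIso_ordLess_trans[OF i1 cK] .
      ultimately show ?thesis using card_of_ordIso[of K' "K \<times> Rs"] by blast
    next
      case False2: False
      then have True: "ordLeq2 (card_of K) (card_of Rs)"
        using ordLeq_total[OF card_of_Well_order[of Rs] card_of_Well_order[of K]] by blast
      then have i1: "ordIso2 (card_of K') (card_of Rs)" using w unfolding has_width_def by blast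
      have "\<not> finite Rs"
      proof
        assume "finite Rs" then have "finite K" using card_of_ordLeq_finite[OF True] by blast
        then show False using False \<open>finite Rs\<close> by blast
      qed
      then have i2: "ordIso2 (card_of (K \<times> Rs)) (card_of Rs)"
        by (rule card_of_Times_infinite_simps(3)[OF _ Kne True])
      have "ordIso2 (card_of K') (card_of (K \<times> Rs))"
        using ordIso_transitive[OF i1 ordIso_symmetric[OF i2]] .
      moreover have "ordLess2 (card_of K') lam" using ordIso_ordLess_trans[OF i1 cR] .
      ultimately show ?thesis using card_of_ordIso[of K' "K \<times> Rs"] by blast
    qed
    then obtain g where g: "bij_betw g K' (K \<times> Rs)" and cK': "ordLess2 (card_of K') lam" by blast
    show ?thesis by (rule construct[OF co inf sys nb g cK'])
  qed
qed

end
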